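(* Let $X$ be a finite set of distinct points in a real Euclidean affine space, representing interacting particles, such that for each ordered pair of distinct points $x,y\in X$ the force on $x$ due to $y$ is $\varphi_{x,y}\overrightarrow{xy}$ with $\varphi_{x,y}\in\mathbb{R}$, and set $\varphi_{x,x}=-\sum_{y\neq x}\varphi_{x,y}$. The following are equivalent: (i) $X$ is an equilibrium, i.e. $\sum_{y\neq x}\varphi_{x,y}\overrightarrow{xy}=\overrightarrow{O}$ for every $x\in X$; (ii) $\sum_{z\in X}\varphi_{x,z}\left(\overrightarrow{xy}^2-\overrightarrow{yz}^2+\overrightarrow{zx}^2\right)=0$ for all $x,y\in X$; (iii) $\sum_{(z,w)\in X\times X}\varphi_{x,z}\varphi_{y,w}\,\overrightarrow{zw}^2=0$ for all $x,y\in X$.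
   Context: The square of a vector denotes its inner product with itself, so $\overrightarrow{xy}^2$ is the squared distance between $x$ and $y$. *)

theory Defs
  imports "HOL-Analysis.Analysis"
begin

definition phi_ext :: "'a set \<Rightarrow> ('a \<Rightarrow> 'a \<Rightarrow> real) \<Rightarrow> 'a \<Rightarrow> 'a \<Rightarrow> real" where
  "phi_ext X \<phi> x y = (if x = y then - (\<Sum>z\<in>X - {x}. \<phi> x z) else \<phi> x y)"

definition equilibrium :: "'a::real_inner set \<Rightarrow> ('a \<Rightarrow> 'a \<Rightarrow> real) \<Rightarrow> bool" where
  "equilibrium X \<phi> \<longleftrightarrow> (\<forall>x\<in>X. (\<Sum>y\<in>X - {x}. \<phi> x y *\<^sub>R (y - x)) = 0)"

end

theory Submission
  imports Defs
begin

lemma phi_sum0: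
  fixes X :: "'a::euclidean_space set"
  assumes "finite X" "x \<in> X"
  shows "(\<Sum>z\<in>X. phi_ext X \<phi> x z) = 0"
proof -
  have "(\<Sum>z\<in>X. phi_ext X \<phi> x z) = phi_ext X \<phi> x x + (\<Sum>z\<in>X-{x}. phi_ext X \<phi> x z)"
    using assms by (simp add: sum.remove)
  also have "(\<Sum>z\<in>X-{x}. phi_ext X \<phi> x z) = (\<Sum>z\<in>X-{x}. \<phi> x z)"
    by (rule sum.cong) (auto simp: phi_ext_def)
  finally show ?thesis by (simp add: phi_ext_def)
qed

lemma F_eq:
  fixes X :: "'a::euclidean_space set"
  assumes "finite X" "x \<in> X"
  shows "(\<Sum>z\<in>X. phi_ext X \<phi> x z *\<^sub>R (z - x)) = (\<Sum>z\<in>X-{x}. \<phi> x z *\<^sub>R (z - x))"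
proof -
  have "(\<Sum>z\<in>X. phi_ext X \<phi> x z *\<^sub>R (z - x)) = phi_ext X \<phi> x x *\<^sub>R (x - x) + (\<Sum>z\<in>X-{x}. phi_ext X \<phi> x z *\<^sub>R (z - x))"
    using assms by (simp add: sum.remove)
  also have "(\<Sum>z\<in>X-{x}. phi_ext X \<phi> x z *\<^sub>R (z - x)) = (\<Sum>z\<in>X-{x}. \<phi> x z *\<^sub>R (z - x))"
    by (rule sum.cong) (auto simp: phi_ext_def)
  finally show ?thesis by (simp only: diff_self scaleR_zero_right add_0_left)
qed

lemma F_alt:
  fixes X :: "'a::euclidean_space set"
  assumes "finite X" "x \<in> X"
  shows "(\<Sum>z\<in>X. phi_ext X \<phi> x z *\<^sub>R z) = (\<Sum>z\<in>X. phi_ext X \<phi> x z *\<^sub>R (z - x))"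
proof -
  have "(\<Sum>z\<in>X. phi_ext X \<phi> x z *\<^sub>R (z - x)) = (\<Sum>z\<in>X. phi_ext X \<phi> x z *\<^sub>R z) - (\<Sum>z\<in>X. phi_ext X \<phi> x z) *\<^sub>R x"
    by (simp add: scaleR_diff_right sum_subtractf scaleR_sum_left)
  then show ?thesis using phi_sum0[OF assms] by simp
qed

lemma L2:
  fixes X :: "'a::euclidean_space set"
  shows "(\<Sum>z\<in>X. phi_ext X \<phi> x z *
                 ((y - x) \<bullet> (y - x) - (z - y) \<bullet> (z - y) + (x - z) \<bullet> (x - z)))
       = 2 * ((\<Sum>z\<in>X. phi_ext X \<phi> x z *\<^sub>R (z - x)) \<bullet> (y - x))"
  unfolding inner_sum_left sum_distrib_left
  by (rule sum.cong) (auto simp: algebra_simps inner_diff_left inner_diff_right inner_commute)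

lemma L4:
  fixes X :: "'a::euclidean_space set"
  assumes "finite X" "x \<in> X" "y \<in> X"
  shows "(\<Sum>(z, w)\<in>X \<times> X. phi_ext X \<phi> x z * phi_ext X \<phi> y w * ((w - z) \<bullet> (w - z)))
      = - 2 * ((\<Sum>z\<in>X. phi_ext X \<phi> x z *\<^sub>R (z - x)) \<bullet> (\<Sum>z\<in>X. phi_ext X \<phi> y z *\<^sub>R (z - y)))"
proof -
  define p where "p = phi_ext X \<phi> x"
  define q where "q = phi_ext X \<phi> y"
  have p0: "sum p X = 0" unfolding p_def using phi_sum0[OF assms(1,2)] .
  have q0: "sum q X = 0" unfolding q_def using phi_sum0[OF assms(1,3)] .
  have "(\<Sum>(z, w)\<in>X \<times> X. p z * q w * ((w - z) \<bullet> (w - z)))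
     = (\<Sum>z\<in>X. \<Sum>w\<in>X. p z * q w * ((w - z) \<bullet> (w - z)))"
    by (simp add: sum.cartesian_product)
  also have "\<dots> = (\<Sum>z\<in>X. (\<Sum>w\<in>X. p z * (q w * (w \<bullet> w))) + (\<Sum>w\<in>X. q w * (p z * (z \<bullet> z))) - 2 * (\<Sum>w\<in>X. p z * q w * (z \<bullet> w)))"
    by (intro sum.cong refl) (simp add: sum.distrib sum_subtractf sum_distrib_left algebra_simps inner_diff_left inner_diff_right inner_commute)
  also have "\<dots> = (\<Sum>z\<in>X. (\<Sum>w\<in>X. p z * (q w * (w \<bullet> w)))) + (\<Sum>z\<in>X. (\<Sum>w\<in>X. q w * (p z * (z \<bullet> z)))) - 2 * (\<Sum>z\<in>X. \<Sum>w\<in>X. p z * q w * (z \<bullet> w))"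
    by (simp add: sum.distrib sum_subtractf sum_distrib_left)
  also have "(\<Sum>z\<in>X. (\<Sum>w\<in>X. p z * (q w * (w \<bullet> w)))) = 0"
  proof -
    have "(\<Sum>z\<in>X. (\<Sum>w\<in>X. p z * (q w * (w \<bullet> w)))) = (\<Sum>z\<in>X. p z * (\<Sum>w\<in>X. q w * (w \<bullet> w)))"
      by (simp add: sum_distrib_left)
    also have "\<dots> = sum p X * (\<Sum>w\<in>X. q w * (w \<bullet> w))"
      by (simp add: sum_distrib_right)
    finally show ?thesis using p0 by simp
  qed
  also have "(\<Sum>z\<in>X. (\<Sum>w\<in>X. q w * (p z * (z \<bullet> z)))) = 0"
  proof -
    have "(\<Sum>z\<in>X. (\<Sum>w\<in>X. q w * (p z * (z \<bullet> z)))) = (\<Sum>z\<in>X. sum q X * (p z * (z \<bullet> z)))"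
      by (simp add: sum_distrib_right)
    then show ?thesis using q0 by simp
  qed
  also have "(\<Sum>z\<in>X. \<Sum>w\<in>X. p z * q w * (z \<bullet> w)) = (\<Sum>z\<in>X. p z *\<^sub>R z) \<bullet> (\<Sum>w\<in>X. q w *\<^sub>R w)"
    unfolding inner_sum_left
  proof (rule sum.cong[OF refl])
    fix z assume "z \<in> X"
    show "(\<Sum>w\<in>X. p z * q w * (z \<bullet> w)) = (p z *\<^sub>R z) \<bullet> (\<Sum>w\<in>X. q w *\<^sub>R w)"
      unfolding inner_sum_right by (rule sum.cong[OF refl]) simp
  qed
  finally show ?thesis using F_alt[OF assms(1,2)] F_alt[OF assms(1,3)] unfolding p_def q_def by simp
qed

theorem corollary3p2:
  fixes X :: "'a::euclidean_space set" and \<phi> :: "'a \<Rightarrow> 'a \<Rightarrow> real"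
  assumes "finite X"
  shows "(equilibrium X \<phi>
          \<longleftrightarrow> (\<forall>x\<in>X. \<forall>y\<in>X. (\<Sum>z\<in>X. phi_ext X \<phi> x z *
                 ((y - x) \<bullet> (y - x) - (z - y) \<bullet> (z - y) + (x - z) \<bullet> (x - z))) = 0))
       \<and> (equilibrium X \<phi>
          \<longleftrightarrow> (\<forall>x\<in>X. \<forall>y\<in>X. (\<Sum>(z, w)\<in>X \<times> X. phi_ext X \<phi> x z * phi_ext X \<phi> y w *
                 ((w - z) \<bullet> (w - z))) = 0))"
proof -
  define F where "F x = (\<Sum>z\<in>X. phi_ext X \<phi> x z *\<^sub>R (z - x))" for x
  have eq: "equilibrium X \<phi> \<longleftrightarrow> (\<forall>x\<in>X. F x = 0)"
    unfolding equilibrium_def F_def using F_eq[OF assms] by simp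
  have A: "(\<forall>x\<in>X. F x = 0) \<longleftrightarrow> (\<forall>x\<in>X. \<forall>y\<in>X. F x \<bullet> (y - x) = 0)"
  proof
    assume "\<forall>x\<in>X. F x = 0" then show "\<forall>x\<in>X. \<forall>y\<in>X. F x \<bullet> (y - x) = 0" by simp
  next
    assume h: "\<forall>x\<in>X. \<forall>y\<in>X. F x \<bullet> (y - x) = 0"
    show "\<forall>x\<in>X. F x = 0"
    proof
      fix x assume x: "x \<in> X"
      have "F x \<bullet> F x = (\<Sum>z\<in>X. phi_ext X \<phi> x z * (F x \<bullet> (z - x)))"
        by (simp add: F_def[of x] inner_sum_right)
      also have "\<dots> = 0" using h x by simp
      finally show "F x = 0" by simp
    qed
  qed
  have B: "(\<forall>x\<in>X. F x = 0) \<longleftrightarrow> (\<forall>x\<in>X. \<forall>y\<in>X. F x \<bullet> F y = 0)"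
    by (metis inner_eq_zero_iff inner_zero_left)
  have C: "(\<forall>x\<in>X. \<forall>y\<in>X. (\<Sum>z\<in>X. phi_ext X \<phi> x z *
                 ((y - x) \<bullet> (y - x) - (z - y) \<bullet> (z - y) + (x - z) \<bullet> (x - z))) = 0)
     \<longleftrightarrow> (\<forall>x\<in>X. \<forall>y\<in>X. F x \<bullet> (y - x) = 0)"
    unfolding L2 F_def by simp
  have D: "(\<forall>x\<in>X. \<forall>y\<in>X. (\<Sum>(z, w)\<in>X \<times> X. phi_ext X \<phi> x z * phi_ext X \<phi> y w *
                 ((w - z) \<bullet> (w - z))) = 0)
     \<longleftrightarrow> (\<forall>x\<in>X. \<forall>y\<in>X. F x \<bullet> F y = 0)"
    using L4[OF assms] unfolding F_def by (simp cong: ball_cong)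
  show ?thesis using eq A B C D by blast
qed

end
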